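(* Let $G$ be a graph with maximum degree $2$ and let $k\ge2$ be an integer. Then the number of components of $G$ that are paths with at least $k-1$ vertices equals $s(G,P_{k-1})-s(G,P_k)-k\,s(G,C_k)$.
   Context: $P_j$ and $C_j$ denote the path and cycle with $j$ vertices; $s(G,H)$ is the number of vertex subsets $X\subseteq V(G)$ such that $G[X]$ is isomorphic to $H$; by convention $s(G,C_2)=0$. *)

theory Defs
  imports Main
begin

definition simple_graph :: "'a set \<Rightarrow> ('a \<Rightarrow> 'a \<Rightarrow> bool) \<Rightarrow> bool" where
  "simple_graph V E \<longleftrightarrow> finite V \<and> (\<forall>x y. E x y \<longrightarrow> x \<in> V \<and> y \<in> V)
     \<and> (\<forall>x y. E x y \<longrightarrow> E y x) \<and> (\<forall>x. \<not> E x x)"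

definition degree :: "('a \<Rightarrow> 'a \<Rightarrow> bool) \<Rightarrow> 'a \<Rightarrow> nat" where
  "degree E v = card {u. E v u}"

definition max_degree_le :: "'a set \<Rightarrow> ('a \<Rightarrow> 'a \<Rightarrow> bool) \<Rightarrow> nat \<Rightarrow> bool" where
  "max_degree_le V E d \<longleftrightarrow> (\<forall>v\<in>V. degree E v \<le> d)"

definition induced_iso :: "('a \<Rightarrow> 'a \<Rightarrow> bool) \<Rightarrow> 'a set \<Rightarrow> ('b \<Rightarrow> 'b \<Rightarrow> bool) \<Rightarrow> 'b set \<Rightarrow> bool" where
  "induced_iso E X F Y \<longleftrightarrow> (\<exists>f. bij_betw f X Y \<and> (\<forall>x\<in>X. \<forall>y\<in>X. E x y \<longleftrightarrow> F (f x) (f y)))"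

definition sub_count :: "'a set \<Rightarrow> ('a \<Rightarrow> 'a \<Rightarrow> bool) \<Rightarrow> 'b set \<Rightarrow> ('b \<Rightarrow> 'b \<Rightarrow> bool) \<Rightarrow> nat" where
  "sub_count V E W F = card {X. X \<subseteq> V \<and> induced_iso E X F W}"

definition path_verts :: "nat \<Rightarrow> nat set" where
  "path_verts j = {0..<j}"
definition path_edge :: "nat \<Rightarrow> nat \<Rightarrow> nat \<Rightarrow> bool" where
  "path_edge j a b \<longleftrightarrow> a < j \<and> b < j \<and> (b = a + 1 \<or> a = b + 1)"

definition cycle_edge :: "nat \<Rightarrow> nat \<Rightarrow> nat \<Rightarrow> bool" where
  "cycle_edge j a b \<longleftrightarrow> a < j \<and> b < j \<and> (b = (a + 1) mod j \<or> a = (b + 1) mod j)"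

definition cycle_count :: "'a set \<Rightarrow> ('a \<Rightarrow> 'a \<Rightarrow> bool) \<Rightarrow> nat \<Rightarrow> nat" where
  "cycle_count V E j = (if j \<le> 2 then 0 else sub_count V E {0..<j} (cycle_edge j))"

definition path_count :: "'a set \<Rightarrow> ('a \<Rightarrow> 'a \<Rightarrow> bool) \<Rightarrow> nat \<Rightarrow> nat" where
  "path_count V E j = sub_count V E (path_verts j) (path_edge j)"

definition components :: "'a set \<Rightarrow> ('a \<Rightarrow> 'a \<Rightarrow> bool) \<Rightarrow> 'a set set" where
  "components V E = (\<lambda>v. {u. E\<^sup>*\<^sup>* v u}) ` V"

definition long_path_components :: "'a set \<Rightarrow> ('a \<Rightarrow> 'a \<Rightarrow> bool) \<Rightarrow> nat \<Rightarrow> nat" where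
  "long_path_components V E m = card {C \<in> components V E.
      \<exists>j\<ge>m. induced_iso E C (path_edge j) (path_verts j)}"

end

theory Submission
  imports Defs
begin

lemma iso_rev:
  "induced_iso E X F W \<longleftrightarrow> (\<exists>g. bij_betw g W X \<and> (\<forall>a\<in>W. \<forall>b\<in>W. E (g a) (g b) \<longleftrightarrow> F a b))"
proof
  assume "induced_iso E X F W"
  then obtain f where f: "bij_betw f X W" "\<forall>x\<in>X. \<forall>y\<in>X. E x y \<longleftrightarrow> F (f x) (f y)"
    unfolding induced_iso_def by blast
  let ?g = "inv_into X f"
  have "bij_betw ?g W X" using f(1) by (simp add: bij_betw_inv_into)
  moreover have "\<forall>a\<in>W. \<forall>b\<in>W. E (?g a) (?g b) \<longleftrightarrow> F a b"
  proof (intro ballI)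
    fix a b assume "a \<in> W" "b \<in> W"
    then have "?g a \<in> X" "?g b \<in> X" "f (?g a) = a" "f (?g b) = b"
      using f(1) by (auto simp: bij_betw_def inv_into_into f_inv_into_f)
    then show "E (?g a) (?g b) \<longleftrightarrow> F a b" using f(2) by metis
  qed
  ultimately show "\<exists>g. bij_betw g W X \<and> (\<forall>a\<in>W. \<forall>b\<in>W. E (g a) (g b) \<longleftrightarrow> F a b)" by blast
next
  assume "\<exists>g. bij_betw g W X \<and> (\<forall>a\<in>W. \<forall>b\<in>W. E (g a) (g b) \<longleftrightarrow> F a b)"
  then obtain g where g: "bij_betw g W X" "\<forall>a\<in>W. \<forall>b\<in>W. E (g a) (g b) \<longleftrightarrow> F a b" by blast
  let ?f = "inv_into W g"
  have "bij_betw ?f X W" using g(1) by (simp add: bij_betw_inv_into)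
  moreover have "\<forall>x\<in>X. \<forall>y\<in>X. E x y \<longleftrightarrow> F (?f x) (?f y)"
  proof (intro ballI)
    fix x y assume "x \<in> X" "y \<in> X"
    then have "?f x \<in> W" "?f y \<in> W" "g (?f x) = x" "g (?f y) = y"
      using g(1) by (auto simp: bij_betw_def inv_into_into f_inv_into_f)
    then show "E x y \<longleftrightarrow> F (?f x) (?f y)" using g(2) by metis
  qed
  ultimately show "induced_iso E X F W" unfolding induced_iso_def by blast
qed

lemma dir_lemma:
  assumes inj: "inj_on f {0..<j}" and injs: "inj_on s (f ` {0..<j})"
    and step: "\<And>a. Suc a < j \<Longrightarrow> f (Suc a) = s (f a) \<or> f a = s (f (Suc a))"
  shows "(\<forall>a. Suc a < j \<longrightarrow> f (Suc a) = s (f a)) \<or> (\<forall>a. Suc a < j \<longrightarrow> f a = s (f (Suc a)))"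
proof (cases "j \<le> 1")
  case True then show ?thesis by auto
next
  case False
  have noteq: "f a \<noteq> f (Suc (Suc a))" if "Suc (Suc a) < j" for a
    using inj_onD[OF inj, of a "Suc (Suc a)"] that by auto
  have sinj: "s (f a) = s (f b) \<Longrightarrow> a < j \<Longrightarrow> b < j \<Longrightarrow> f a = f b" for a b
    using inj_onD[OF injs, of "f a" "f b"] by auto
  show ?thesis
  proof (cases "f (Suc 0) = s (f 0)")
    case True
    have "Suc a < j \<longrightarrow> f (Suc a) = s (f a)" for a
    proof (induction a)
      case 0 then show ?case using True by simp
    next
      case (Suc a)
      show ?case
      proof
        assume a: "Suc (Suc a) < j"
        have "f (Suc (Suc a)) = s (f (Suc a)) \<or> f (Suc a) = s (f (Suc (Suc a)))" using step a by blast
        moreover have "f (Suc a) = s (f a)" using Suc a by auto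
        ultimately show "f (Suc (Suc a)) = s (f (Suc a))"
          using sinj[of a "Suc (Suc a)"] noteq[of a] a by auto
      qed
    qed
    then show ?thesis by blast
  next
    case False
    then have F0: "f 0 = s (f (Suc 0))" using step[of 0] \<open>\<not> j \<le> 1\<close> by auto
    have "Suc a < j \<longrightarrow> f a = s (f (Suc a))" for a
    proof (induction a)
      case 0 then show ?case using F0 by simp
    next
      case (Suc a)
      show ?case
      proof
        assume a: "Suc (Suc a) < j"
        have "f (Suc (Suc a)) = s (f (Suc a)) \<or> f (Suc a) = s (f (Suc (Suc a)))" using step a by blast
        moreover have "f a = s (f (Suc a))" using Suc a by auto
        ultimately show "f (Suc a) = s (f (Suc (Suc a)))"
          using noteq[of a] a by auto
      qed
    qed
    then show ?thesis by blast
  qed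
qed


lemma up_iso:
  assumes bij: "bij_betw g {0..<j} X"
    and iso: "\<forall>a<j. \<forall>b<j. R (g a) (g b) \<longleftrightarrow> P a b"
    and Prev: "\<forall>a<j. \<forall>b<j. P (j-1-a) (j-1-b) \<longleftrightarrow> P a b"
    and Pstep: "\<forall>a. Suc a < j \<longrightarrow> P a (Suc a)"
    and injs: "inj_on s X"
    and Rs: "\<forall>x\<in>X. \<forall>y\<in>X. R x y \<longrightarrow> y = s x \<or> x = s y"
  shows "\<exists>h. bij_betw h {0..<j} X \<and> (\<forall>a<j. \<forall>b<j. R (h a) (h b) \<longleftrightarrow> P a b)
            \<and> (\<forall>a. Suc a < j \<longrightarrow> h (Suc a) = s (h a))"
proof -
  have inj: "inj_on g {0..<j}" and img: "g ` {0..<j} = X" using bij by (auto simp: bij_betw_def)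
  have step: "g (Suc a) = s (g a) \<or> g a = s (g (Suc a))" if "Suc a < j" for a
    using Rs iso Pstep that img by (metis atLeastLessThan_iff imageI le0 less_trans lessI)
  from dir_lemma[OF inj _ step] img injs
  consider "\<forall>a. Suc a < j \<longrightarrow> g (Suc a) = s (g a)" | "\<forall>a. Suc a < j \<longrightarrow> g a = s (g (Suc a))" by auto
  then show ?thesis
  proof cases
    case 1 then show ?thesis using bij iso by blast
  next
    case 2
    define h where "h a = g (j - 1 - a)" for a
    have rb: "bij_betw (\<lambda>a. j - 1 - a) {0..<j} {0..<j}"
      by (rule bij_betw_byWitness[where f'="\<lambda>a. j - 1 - a"]) auto
    have "bij_betw h {0..<j} X" unfolding h_def
      using bij_betw_trans[OF rb bij] by (simp add: comp_def)
    moreover have "\<forall>a<j. \<forall>b<j. R (h a) (h b) \<longleftrightarrow> P a b"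
      unfolding h_def using iso Prev by auto
    moreover have "\<forall>a. Suc a < j \<longrightarrow> h (Suc a) = s (h a)"
    proof (intro allI impI)
      fix a assume a: "Suc a < j"
      have "g (j - 1 - Suc a) = s (g (Suc (j - 1 - Suc a)))" using 2 a by auto
      moreover have "Suc (j - 1 - Suc a) = j - 1 - a" using a by auto
      ultimately show "h (Suc a) = s (h a)" unfolding h_def by simp
    qed
    ultimately show ?thesis by blast
  qed
qed

lemma up_vals:
  assumes "\<forall>a. Suc a < j \<longrightarrow> h (Suc a) = s (h a)"
  shows "a < j \<Longrightarrow> h a = (s ^^ a) (h 0)"
  using assms by (induction a) auto

lemma path_edge_rev: "\<forall>a<j. \<forall>b<j. path_edge j (j-1-a) (j-1-b) \<longleftrightarrow> path_edge j a b"
  unfolding path_edge_def by auto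

lemma path_edge_step: "\<forall>a. Suc a < j \<longrightarrow> path_edge j a (Suc a)"
  unfolding path_edge_def by auto

lemma cycle_edge_step: "\<forall>a. Suc a < j \<longrightarrow> cycle_edge j a (Suc a)"
  unfolding cycle_edge_def by auto

lemma mod_cancel_lt:
  fixes n a b x :: nat
  assumes "a < n" "b < n" "(x + a) mod n = (x + b) mod n"
  shows "a = b"
proof (rule ccontr)
  assume ne: "a \<noteq> b"
  have d: "\<not> n dvd d" if "0 < d" "d < n" for d :: nat using that by (meson nat_dvd_not_less)
  show False
  proof (cases "a < b")
    case True
    have "n dvd (x + b) - (x + a)" using assms(3) True by (subst mod_eq_dvd_iff_nat[symmetric]) auto
    then show False using d[of "b - a"] True assms by auto
  next
    case False
    then have "b < a" using ne by auto
    have "n dvd (x + a) - (x + b)" using assms(3) \<open>b < a\<close> by (subst mod_eq_dvd_iff_nat[symmetric]) auto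
    then show False using d[of "a - b"] \<open>b < a\<close> assms by auto
  qed
qed

lemma cycle_edge_rev: "\<forall>a<j. \<forall>b<j. cycle_edge j (j-1-a) (j-1-b) \<longleftrightarrow> cycle_edge j a b"
proof (intro allI impI)
  fix a b assume ab: "a < j" "b < j"
  have key: "(j-1-b = (j-1-a + 1) mod j) \<longleftrightarrow> (a = (b + 1) mod j)"
  proof (cases "Suc b < j")
    case True
    then have "(b+1) mod j = b + 1" by simp
    moreover have "(j-1-a + 1) mod j = (if a = 0 then 0 else j - a)" using ab by auto
    ultimately show ?thesis using ab True by auto
  next
    case False
    then have "b = j - 1" using ab by auto
    then have "(b+1) mod j = 0" using ab by auto
    moreover have "(j-1-a + 1) mod j = (if a = 0 then 0 else j - a)" using ab by auto
    ultimately show ?thesis using ab \<open>b = j - 1\<close> by auto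
  qed
  have key2: "(j-1-a = (j-1-b + 1) mod j) \<longleftrightarrow> (b = (a + 1) mod j)"
  proof (cases "Suc a < j")
    case True
    then have "(a+1) mod j = a + 1" by simp
    moreover have "(j-1-b + 1) mod j = (if b = 0 then 0 else j - b)" using ab by auto
    ultimately show ?thesis using ab True by auto
  next
    case False
    then have "a = j - 1" using ab by auto
    then have "(a+1) mod j = 0" using ab by auto
    moreover have "(j-1-b + 1) mod j = (if b = 0 then 0 else j - b)" using ab by auto
    ultimately show ?thesis using ab \<open>a = j - 1\<close> by auto
  qed
  show "cycle_edge j (j-1-a) (j-1-b) \<longleftrightarrow> cycle_edge j a b"
    unfolding cycle_edge_def using ab key key2 by auto
qed


lemma funpow_Suc_add: "(Suc ^^ a) x = x + a"
  by (induction a) auto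

lemma funpow_mod_add: "x < n \<Longrightarrow> ((\<lambda>y. (y + 1) mod n) ^^ a) x = (x + a) mod n"
proof (induction a)
  case 0 then show ?case by simp
next
  case (Suc a) then show ?case by (simp add: mod_Suc_eq)
qed

lemma bij_card: "bij_betw g {0..<j} X \<Longrightarrow> card X = j"
  by (metis bij_betw_same_card card_atLeastLessThan diff_zero)

lemma path_edge_Suc: "path_edge n x y \<Longrightarrow> y = Suc x \<or> x = Suc y"
  unfolding path_edge_def by auto

lemma cycle_edge_Suc: "cycle_edge n x y \<Longrightarrow> y = (x + 1) mod n \<or> x = (y + 1) mod n"
  unfolding cycle_edge_def by auto

lemma inj_mod_succ: "inj_on (\<lambda>y. (y + 1) mod n) {0..<(n::nat)}"
proof (rule inj_onI)
  fix x y assume "x \<in> {0..<n}" "y \<in> {0..<n}" "(x + 1) mod n = (y + 1) mod n"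
  then show "x = y" using mod_cancel_lt[of x n y 1] by (simp add: add.commute)
qed

lemma path_in_path_sets:
  assumes j: "1 \<le> j"
  shows "{X. X \<subseteq> {0..<n} \<and> induced_iso (path_edge n) X (path_edge j) {0..<j}}
        = (\<lambda>c. {c..<c+j}) ` {..<n+1-j}"
proof (intro equalityI subsetI)
  fix X assume "X \<in> {X. X \<subseteq> {0..<n} \<and> induced_iso (path_edge n) X (path_edge j) {0..<j}}"
  then have sub: "X \<subseteq> {0..<n}" and "induced_iso (path_edge n) X (path_edge j) {0..<j}" by auto
  then obtain g where g: "bij_betw g {0..<j} X" "\<forall>a\<in>{0..<j}. \<forall>b\<in>{0..<j}. path_edge n (g a) (g b) \<longleftrightarrow> path_edge j a b"
    unfolding iso_rev by blast
  have "\<exists>h. bij_betw h {0..<j} X \<and> (\<forall>a<j. \<forall>b<j. path_edge n (h a) (h b) \<longleftrightarrow> path_edge j a b)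
            \<and> (\<forall>a. Suc a < j \<longrightarrow> h (Suc a) = Suc (h a))"
    by (rule up_iso[OF g(1) _ path_edge_rev path_edge_step]) (use g(2) path_edge_Suc in auto)
  then obtain h where h: "bij_betw h {0..<j} X" "\<forall>a. Suc a < j \<longrightarrow> h (Suc a) = Suc (h a)" by blast
  define c0 where "c0 = h 0"
  have hv: "h a = c0 + a" if "a < j" for a
    using up_vals[OF h(2) that] funpow_Suc_add unfolding c0_def by simp
  have X: "X = {c0..<c0 + j}"
  proof -
    have "X = h ` {0..<j}" using h(1) by (simp add: bij_betw_def)
    also have "\<dots> = (\<lambda>a. c0 + a) ` {0..<j}" using hv by (intro image_cong) auto
    also have "\<dots> = {c0..<c0 + j}" by (simp add: add.commute)
    finally show ?thesis .
  qed
  have "c0 + (j - 1) \<in> X" using X j by auto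
  then have "c0 < n + 1 - j" using sub j by auto
  then show "X \<in> (\<lambda>c. {c..<c+j}) ` {..<n+1-j}" using X by auto
next
  fix X assume "X \<in> (\<lambda>c. {c..<c+j}) ` {..<n+1-j}"
  then obtain c where c: "c < n + 1 - j" "X = {c..<c+j}" by auto
  have "bij_betw (\<lambda>a. c + a) {0..<j} X"
    unfolding c(2) by (rule bij_betw_byWitness[where f'="\<lambda>x. x - c"]) auto
  moreover have "\<forall>a\<in>{0..<j}. \<forall>b\<in>{0..<j}. path_edge n (c + a) (c + b) \<longleftrightarrow> path_edge j a b"
    using c(1) unfolding path_edge_def by auto
  ultimately have "induced_iso (path_edge n) X (path_edge j) {0..<j}"
    unfolding iso_rev by blast
  moreover have "X \<subseteq> {0..<n}" using c by auto
  ultimately show "X \<in> {X. X \<subseteq> {0..<n} \<and> induced_iso (path_edge n) X (path_edge j) {0..<j}}" by auto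
qed

lemma path_in_path:
  assumes j: "1 \<le> j"
  shows "sub_count {0..<n} (path_edge n) {0..<j} (path_edge j) = n + 1 - j"
proof -
  have inj: "inj_on (\<lambda>c. {c..<c+j}) {..<n+1-j}"
  proof (rule inj_onI)
    fix c d assume eq: "{c..<c+j} = {d..<d+j}"
    have "c \<in> {c..<c+j}" "d \<in> {d..<d+j}" using j by auto
    then have "c \<in> {d..<d+j}" "d \<in> {c..<c+j}" unfolding eq by auto
    then show "c = d" by simp
  qed
  have "card ((\<lambda>c. {c..<c+j}) ` {..<n+1-j}) = card {..<n+1-j}" by (rule card_image[OF inj])
  also have "\<dots> = n + 1 - j" by (rule card_lessThan)
  finally show ?thesis unfolding sub_count_def path_in_path_sets[OF j] .
qed


definition arc :: "nat \<Rightarrow> nat \<Rightarrow> nat \<Rightarrow> nat set" where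
  "arc n j c = (\<lambda>a. (c + a) mod n) ` {0..<j}"

lemma cyc_struct:
  assumes n: "n \<ge> 3" and j: "1 \<le> j" and sub: "X \<subseteq> {0..<n}"
    and iso: "induced_iso (cycle_edge n) X (path_edge j) {0..<j}"
  shows "j < n \<and> (\<exists>c<n. X = arc n j c)"
proof -
  obtain g where g: "bij_betw g {0..<j} X" "\<forall>a\<in>{0..<j}. \<forall>b\<in>{0..<j}. cycle_edge n (g a) (g b) \<longleftrightarrow> path_edge j a b"
    using iso unfolding iso_rev by blast
  have injs: "inj_on (\<lambda>y. (y + 1) mod n) X" using inj_on_subset[OF inj_mod_succ sub] .
  have "\<exists>h. bij_betw h {0..<j} X \<and> (\<forall>a<j. \<forall>b<j. cycle_edge n (h a) (h b) \<longleftrightarrow> path_edge j a b)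
            \<and> (\<forall>a. Suc a < j \<longrightarrow> h (Suc a) = (h a + 1) mod n)"
    by (rule up_iso[OF g(1) _ path_edge_rev path_edge_step injs]) (use g(2) cycle_edge_Suc in auto)
  then obtain h where h: "bij_betw h {0..<j} X" "\<forall>a<j. \<forall>b<j. cycle_edge n (h a) (h b) \<longleftrightarrow> path_edge j a b"
      "\<forall>a. Suc a < j \<longrightarrow> h (Suc a) = (h a + 1) mod n" by blast
  define c0 where "c0 = h 0"
  have hX: "h ` {0..<j} = X" using h(1) by (simp add: bij_betw_def)
  have "h 0 \<in> X" using hX j by auto
  then have c0n: "c0 < n" using sub unfolding c0_def by auto
  have hv: "h a = (c0 + a) mod n" if "a < j" for a
  proof -
    have "h a = ((\<lambda>y. (y + 1) mod n) ^^ a) (h 0)" by (rule up_vals[OF _ that]) (use h(3) in auto)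
    then show ?thesis using funpow_mod_add[OF c0n] unfolding c0_def by simp
  qed
  have X: "X = arc n j c0"
  proof -
    have "X = h ` {0..<j}" using hX by simp
    also have "\<dots> = (\<lambda>a. (c0 + a) mod n) ` {0..<j}" using hv by (intro image_cong) auto
    finally show ?thesis unfolding arc_def .
  qed
  have "card X = j" using bij_card[OF h(1)] .
  moreover have "card X \<le> n" using card_mono[OF _ sub] by simp
  ultimately have jn: "j \<le> n" by simp
  have "j \<noteq> n"
  proof
    assume jn: "j = n"
    have e1: "h (n - 1) = (c0 + (n - 1)) mod n" using hv[of "n - 1"] jn n by simp
    have e0: "h 0 = c0" unfolding c0_def by simp
    have "((c0 + (n - 1)) mod n + 1) mod n = (c0 + (n - 1) + 1) mod n"
      by (simp add: mod_Suc_eq)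
    also have "(c0 + (n - 1) + 1) mod n = (c0 + n) mod n" using n by simp
    also have "\<dots> = c0" using c0n by simp
    finally have "cycle_edge n (h 0) (h (n - 1))"
      unfolding cycle_edge_def e1 e0 using c0n n by auto
    then have "path_edge j 0 (n - 1)" using h(2) jn n by auto
    then show False unfolding path_edge_def using n by auto
  qed
  then show ?thesis using jn X c0n by auto
qed

lemma arc_in:
  assumes c: "c < n" and jn: "j < n"
  shows "arc n j c \<subseteq> {0..<n}" "induced_iso (cycle_edge n) (arc n j c) (path_edge j) {0..<j}"
proof -
  show "arc n j c \<subseteq> {0..<n}" unfolding arc_def using jn by auto
  have inj: "inj_on (\<lambda>a. (c + a) mod n) {0..<j}"
  proof (rule inj_onI)
    fix x y assume "x \<in> {0..<j}" "y \<in> {0..<j}" "(c + x) mod n = (c + y) mod n"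
    then show "x = y" using mod_cancel_lt[of x n y c] jn by auto
  qed
  have bij: "bij_betw (\<lambda>a. (c + a) mod n) {0..<j} (arc n j c)"
    unfolding arc_def bij_betw_def using inj by simp
  have "cycle_edge n ((c + a) mod n) ((c + b) mod n) \<longleftrightarrow> path_edge j a b" if ab: "a < j" "b < j" for a b
  proof -
    have s1: "((c + a) mod n + 1) mod n = (c + (a + 1)) mod n" by (simp add: mod_Suc_eq)
    have s2: "((c + b) mod n + 1) mod n = (c + (b + 1)) mod n" by (simp add: mod_Suc_eq)
    have "(c + b) mod n = (c + (a + 1)) mod n \<longleftrightarrow> b = a + 1"
      using mod_cancel_lt[of b n "a+1" c] ab jn by auto
    moreover have "(c + a) mod n = (c + (b + 1)) mod n \<longleftrightarrow> a = b + 1"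
      using mod_cancel_lt[of a n "b+1" c] ab jn by auto
    ultimately show ?thesis unfolding cycle_edge_def path_edge_def s1 s2 using ab jn by auto
  qed
  then show "induced_iso (cycle_edge n) (arc n j c) (path_edge j) {0..<j}"
    unfolding iso_rev using bij by auto
qed

lemma arc_inj:
  assumes j: "1 \<le> j" and jn: "j < n"
  shows "inj_on (arc n j) {0..<n}"
proof (rule inj_onI)
  fix c d assume c: "c \<in> {0..<n}" and d: "d \<in> {0..<n}" and eq: "arc n j c = arc n j d"
  have "c \<in> arc n j c" unfolding arc_def using c j by (auto intro!: image_eqI[where x=0])
  then have "c \<in> arc n j d" using eq by simp
  then obtain a where a: "a < j" "c = (d + a) mod n" unfolding arc_def by auto
  show "c = d"
  proof (cases a)
    case 0 then show ?thesis using a d by simp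
  next
    case (Suc a')
    have "(d + a') mod n \<in> arc n j d" unfolding arc_def using a Suc by auto
    moreover have "(d + a') mod n = (c + (n - 1)) mod n"
    proof -
      have "(c + (n - 1)) mod n = (d + a + (n - 1)) mod n" using a by (simp add: mod_add_left_eq)
      also have "\<dots> = (d + a' + n) mod n" using Suc jn by (simp add: algebra_simps)
      also have "\<dots> = (d + a') mod n" by simp
      finally show ?thesis by simp
    qed
    ultimately have "(c + (n - 1)) mod n \<in> arc n j c" using eq by simp
    then obtain b where b: "b < j" "(c + (n - 1)) mod n = (c + b) mod n" unfolding arc_def by auto
    then have "n - 1 = b" using mod_cancel_lt[of "n - 1" n b c] jn by auto
    then show ?thesis using b jn by auto
  qed
qed

lemma path_in_cycle:
  assumes n: "n \<ge> 3" and j: "1 \<le> j"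
  shows "sub_count {0..<n} (cycle_edge n) {0..<j} (path_edge j) = (if j < n then n else 0)"
proof (cases "j < n")
  case True
  have "{X. X \<subseteq> {0..<n} \<and> induced_iso (cycle_edge n) X (path_edge j) {0..<j}} = arc n j ` {0..<n}"
  proof (intro equalityI subsetI)
    fix X assume "X \<in> {X. X \<subseteq> {0..<n} \<and> induced_iso (cycle_edge n) X (path_edge j) {0..<j}}"
    then obtain c where "c < n" "X = arc n j c" using cyc_struct[OF n j] by blast
    then show "X \<in> arc n j ` {0..<n}" by auto
  next
    fix X assume "X \<in> arc n j ` {0..<n}"
    then obtain c where c: "c < n" "X = arc n j c" by auto
    then show "X \<in> {X. X \<subseteq> {0..<n} \<and> induced_iso (cycle_edge n) X (path_edge j) {0..<j}}"
      using arc_in[OF c(1) True] by auto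
  qed
  moreover have "card (arc n j ` {0..<n}) = n" using card_image[OF arc_inj[OF j True]] by simp
  ultimately show ?thesis using True unfolding sub_count_def by simp
next
  case False
  have "{X. X \<subseteq> {0..<n} \<and> induced_iso (cycle_edge n) X (path_edge j) {0..<j}} = {}"
    using cyc_struct[OF n j] False by auto
  then show ?thesis using False unfolding sub_count_def by simp
qed


lemma cycle_edge_wrap: "k \<ge> 3 \<Longrightarrow> cycle_edge k 0 (k - 1)"
  unfolding cycle_edge_def by auto

lemma cycle_in_path:
  assumes k: "k \<ge> 3"
  shows "sub_count {0..<n} (path_edge n) {0..<k} (cycle_edge k) = 0"
proof -
  have "False" if sub: "X \<subseteq> {0..<n}" and iso: "induced_iso (path_edge n) X (cycle_edge k) {0..<k}" for X
  proof -
    obtain g where g: "bij_betw g {0..<k} X" "\<forall>a\<in>{0..<k}. \<forall>b\<in>{0..<k}. path_edge n (g a) (g b) \<longleftrightarrow> cycle_edge k a b"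
      using iso unfolding iso_rev by blast
    have "\<exists>h. bij_betw h {0..<k} X \<and> (\<forall>a<k. \<forall>b<k. path_edge n (h a) (h b) \<longleftrightarrow> cycle_edge k a b)
              \<and> (\<forall>a. Suc a < k \<longrightarrow> h (Suc a) = Suc (h a))"
      by (rule up_iso[OF g(1) _ cycle_edge_rev cycle_edge_step]) (use g(2) path_edge_Suc in auto)
    then obtain h where h: "\<forall>a<k. \<forall>b<k. path_edge n (h a) (h b) \<longleftrightarrow> cycle_edge k a b"
        "\<forall>a. Suc a < k \<longrightarrow> h (Suc a) = Suc (h a)" by blast
    define c0 where "c0 = h 0"
    have hv: "h a = c0 + a" if "a < k" for a
      using up_vals[OF h(2) that] funpow_Suc_add unfolding c0_def by simp
    have "path_edge n (h 0) (h (k - 1))" using h(1) cycle_edge_wrap[OF k] k by auto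
    moreover have "h 0 = c0" "h (k - 1) = c0 + (k - 1)" using hv k by auto
    ultimately show False unfolding path_edge_def using k by auto
  qed
  then have "{X. X \<subseteq> {0..<n} \<and> induced_iso (path_edge n) X (cycle_edge k) {0..<k}} = {}" by blast
  then show ?thesis unfolding sub_count_def by simp
qed

lemma cycle_in_cycle:
  assumes k: "k \<ge> 3" and n: "n \<ge> 3"
  shows "sub_count {0..<n} (cycle_edge n) {0..<k} (cycle_edge k) = (if k = n then 1 else 0)"
proof -
  have main: "k = n \<and> X = {0..<n}" if sub: "X \<subseteq> {0..<n}" and iso: "induced_iso (cycle_edge n) X (cycle_edge k) {0..<k}" for X
  proof -
    obtain g where g: "bij_betw g {0..<k} X" "\<forall>a\<in>{0..<k}. \<forall>b\<in>{0..<k}. cycle_edge n (g a) (g b) \<longleftrightarrow> cycle_edge k a b"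
      using iso unfolding iso_rev by blast
    have injs: "inj_on (\<lambda>y. (y + 1) mod n) X" using inj_on_subset[OF inj_mod_succ sub] .
    have "\<exists>h. bij_betw h {0..<k} X \<and> (\<forall>a<k. \<forall>b<k. cycle_edge n (h a) (h b) \<longleftrightarrow> cycle_edge k a b)
              \<and> (\<forall>a. Suc a < k \<longrightarrow> h (Suc a) = (h a + 1) mod n)"
      by (rule up_iso[OF g(1) _ cycle_edge_rev cycle_edge_step injs]) (use g(2) cycle_edge_Suc in auto)
    then obtain h where h: "bij_betw h {0..<k} X" "\<forall>a<k. \<forall>b<k. cycle_edge n (h a) (h b) \<longleftrightarrow> cycle_edge k a b"
        "\<forall>a. Suc a < k \<longrightarrow> h (Suc a) = (h a + 1) mod n" by blast
    define c0 where "c0 = h 0"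
    have hX: "h ` {0..<k} = X" using h(1) by (simp add: bij_betw_def)
    have "h 0 \<in> X" using hX k by auto
    then have c0n: "c0 < n" using sub unfolding c0_def by auto
    have hv: "h a = (c0 + a) mod n" if "a < k" for a
    proof -
      have "h a = ((\<lambda>y. (y + 1) mod n) ^^ a) (h 0)" by (rule up_vals[OF _ that]) (use h(3) in auto)
      then show ?thesis using funpow_mod_add[OF c0n] unfolding c0_def by simp
    qed
    have cX: "card X = k" using bij_card[OF h(1)] .
    moreover have "card X \<le> n" using card_mono[OF _ sub] by simp
    ultimately have kn: "k \<le> n" by simp
    have ce: "cycle_edge n (h 0) (h (k - 1))" using h(2) cycle_edge_wrap[OF k] k by auto
    have e0: "h 0 = c0" unfolding c0_def by simp
    have e1: "h (k - 1) = (c0 + (k - 1)) mod n" using hv k by simp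
    have "k = n"
    proof (rule ccontr)
      assume "k \<noteq> n"
      then have kn': "k < n" using kn by simp
      from ce consider "(c0 + (k - 1)) mod n = (c0 + 1) mod n" | "c0 = ((c0 + (k - 1)) mod n + 1) mod n"
        unfolding cycle_edge_def e0 e1 by auto
      then show False
      proof cases
        case 1
        then have "k - 1 = 1" using mod_cancel_lt[of "k - 1" n 1 c0] kn' n by auto
        then show False using k by simp
      next
        case 2
        have "((c0 + (k - 1)) mod n + 1) mod n = (c0 + (k - 1) + 1) mod n" by (simp add: mod_Suc_eq)
        also have "(c0 + (k - 1) + 1) = c0 + k" using k by simp
        finally have "(c0 + 0) mod n = (c0 + k) mod n" using 2 c0n by simp
        then have "0 = k" using mod_cancel_lt[of 0 n k c0] kn' n by auto
        then show False using k by simp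
      qed
    qed
    moreover have "X = {0..<n}" using card_subset_eq[OF _ sub] cX \<open>k = n\<close> by simp
    ultimately show ?thesis by simp
  qed
  show ?thesis
  proof (cases "k = n")
    case True
    have "{0..<n} \<in> {X. X \<subseteq> {0..<n} \<and> induced_iso (cycle_edge n) X (cycle_edge k) {0..<k}}"
      unfolding iso_rev using True by (auto intro!: exI[where x=id])
    then have "{X. X \<subseteq> {0..<n} \<and> induced_iso (cycle_edge n) X (cycle_edge k) {0..<k}} = {{0..<n}}"
      using main by blast
    then show ?thesis using True unfolding sub_count_def by simp
  next
    case False
    then have "{X. X \<subseteq> {0..<n} \<and> induced_iso (cycle_edge n) X (cycle_edge k) {0..<k}} = {}"
      using main by blast
    then show ?thesis using False unfolding sub_count_def by simp
  qed
qed


lemma rt_sym: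
  assumes sym: "\<forall>x y. E x y \<longrightarrow> E y x"
  shows "E\<^sup>*\<^sup>* x y \<Longrightarrow> E\<^sup>*\<^sup>* y x"
proof (induction rule: rtranclp.induct)
  case (rtrancl_refl a) then show ?case by simp
next
  case (rtrancl_into_rtrancl a b c)
  then show ?case using sym by (meson converse_rtranclp_into_rtranclp)
qed

lemma rt_V:
  assumes "simple_graph V E"
  shows "E\<^sup>*\<^sup>* x y \<Longrightarrow> x \<in> V \<Longrightarrow> y \<in> V"
proof (induction rule: rtranclp.induct)
  case (rtrancl_refl a) then show ?case by simp
next
  case (rtrancl_into_rtrancl a b c)
  then show ?case using assms unfolding simple_graph_def by blast
qed

lemma degree_two:
  assumes G: "simple_graph V E" and D: "max_degree_le V E 2"
    and "E x a" "E x b" "E x c" "a \<noteq> b"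
  shows "c = a \<or> c = b"
proof (rule ccontr)
  assume "\<not> (c = a \<or> c = b)"
  have xV: "x \<in> V" using G assms(3) unfolding simple_graph_def by blast
  have fin: "finite {u. E x u}"
    using G unfolding simple_graph_def by (metis (no_types, lifting) finite_subset mem_Collect_eq subsetI)
  have "{a, b, c} \<subseteq> {u. E x u}" using assms by auto
  then have "card {a, b, c} \<le> card {u. E x u}" using card_mono[OF fin] by blast
  also have "\<dots> \<le> 2" using D xV unfolding max_degree_le_def degree_def by auto
  finally show False using \<open>\<not> (c = a \<or> c = b)\<close> \<open>a \<noteq> b\<close> by auto
qed

definition lchain :: "('a \<Rightarrow> 'a \<Rightarrow> bool) \<Rightarrow> 'a set \<Rightarrow> 'a list \<Rightarrow> bool" where
  "lchain E C xs \<longleftrightarrow> distinct xs \<and> set xs \<subseteq> C \<and> (\<forall>i. Suc i < length xs \<longrightarrow> E (xs ! i) (xs ! Suc i))"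

lemma longest_chain:
  assumes "finite C" "v \<in> C"
  shows "\<exists>xs. lchain E C xs \<and> (\<forall>ys. lchain E C ys \<longrightarrow> length ys \<le> length xs)"
proof -
  have fin: "finite {xs. lchain E C xs}"
    by (rule finite_subset[OF _ finite_lists_length_le[OF assms(1), of "card C"]])
       (auto simp: lchain_def distinct_card[symmetric] intro: card_mono[OF assms(1)])
  have ne: "[v] \<in> {xs. lchain E C xs}" using assms(2) by (simp add: lchain_def)
  let ?M = "Max (length ` {xs. lchain E C xs})"
  have "?M \<in> length ` {xs. lchain E C xs}" using fin ne by (intro Max_in) auto
  then obtain xs where xs: "lchain E C xs" "length xs = ?M" by auto
  moreover have "\<forall>ys. lchain E C ys \<longrightarrow> length ys \<le> ?M" using fin by (auto intro: Max_ge)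
  ultimately show ?thesis by metis
qed


lemma cycle_edge_lt:
  assumes "a < b" "b < L"
  shows "cycle_edge L a b \<longleftrightarrow> (b = Suc a \<or> (a = 0 \<and> b = L - 1))"
proof -
  have "(a + 1) mod L = a + 1" using assms by simp
  moreover have "(b + 1) mod L = (if b + 1 < L then b + 1 else 0)"
  proof (cases "b + 1 < L")
    case False then have "b + 1 = L" using assms by simp
    then show ?thesis by simp
  qed simp
  ultimately show ?thesis unfolding cycle_edge_def using assms by auto
qed

lemma classify:
  assumes G: "simple_graph V E" and D: "max_degree_le V E 2" and v: "v \<in> V"
  defines "C \<equiv> {u. E\<^sup>*\<^sup>* v u}"
  shows "\<exists>n g. bij_betw g {0..<n} C \<and> ((\<forall>a<n. \<forall>b<n. E (g a) (g b) \<longleftrightarrow> path_edge n a b) \<or>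
           (n \<ge> 3 \<and> (\<forall>a<n. \<forall>b<n. E (g a) (g b) \<longleftrightarrow> cycle_edge n a b)))"
proof -
  have sym: "\<forall>x y. E x y \<longrightarrow> E y x" and irr: "\<forall>x. \<not> E x x" and finV: "finite V"
    using G unfolding simple_graph_def by auto
  have CV: "C \<subseteq> V" unfolding C_def using rt_V[OF G] v by auto
  have finC: "finite C" using finite_subset[OF CV finV] .
  have vC: "v \<in> C" unfolding C_def by simp
  have clos: "y \<in> C" if "x \<in> C" "E x y" for x y
    using that unfolding C_def by (auto intro: rtranclp.rtrancl_into_rtrancl)
  obtain xs where xs: "lchain E C xs" and maxl: "\<And>ys. lchain E C ys \<Longrightarrow> length ys \<le> length xs"
    using longest_chain[OF finC vC, of E] by blast
  define L where "L = length xs"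
  have dist: "distinct xs" and setC: "set xs \<subseteq> C" and ch: "\<And>i. Suc i < L \<Longrightarrow> E (xs ! i) (xs ! Suc i)"
    using xs unfolding lchain_def L_def by auto
  have L1: "L \<ge> 1"
  proof -
    have "lchain E C [v]" using vC by (simp add: lchain_def)
    then show ?thesis using maxl[of "[v]"] unfolding L_def by simp
  qed
  have inC: "xs ! i \<in> C" if "i < L" for i using setC that unfolding L_def by auto
  have neq: "xs ! i \<noteq> xs ! j" if "i < L" "j < L" "i \<noteq> j" for i j
    using dist that unfolding L_def by (simp add: nth_eq_iff_index_eq)
  have lastN: "w \<in> set xs" if "E (xs ! (L - 1)) w" for w
  proof (rule ccontr)
    assume wn: "w \<notin> set xs"
    have "lchain E C (xs @ [w])"
      unfolding lchain_def
    proof (intro conjI allI impI)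
      show "distinct (xs @ [w])" using dist wn by simp
      show "set (xs @ [w]) \<subseteq> C" using setC clos[OF inC[of "L - 1"] that] L1 by auto
      fix i assume i: "Suc i < length (xs @ [w])"
      show "E ((xs @ [w]) ! i) ((xs @ [w]) ! Suc i)"
      proof (cases "Suc i < L")
        case True then show ?thesis using ch[OF True] by (simp add: nth_append L_def)
      next
        case False
        then have "i = L - 1" using i unfolding L_def by auto
        then show ?thesis using that L1 by (simp add: nth_append L_def)
      qed
    qed
    then show False using maxl[of "xs @ [w]"] unfolding L_def by simp
  qed
  have firstN: "w \<in> set xs" if "E (xs ! 0) w" for w
  proof (rule ccontr)
    assume wn: "w \<notin> set xs"
    have "lchain E C (w # xs)"
      unfolding lchain_def
    proof (intro conjI allI impI)
      show "distinct (w # xs)" using dist wn by simp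
      show "set (w # xs) \<subseteq> C" using setC clos[OF inC[of 0] that] L1 by auto
      fix i assume i: "Suc i < length (w # xs)"
      show "E ((w # xs) ! i) ((w # xs) ! Suc i)"
      proof (cases i)
        case 0 then show ?thesis using that sym by simp
      next
        case (Suc i') then show ?thesis using ch[of i'] i unfolding L_def by simp
      qed
    qed
    then show False using maxl[of "w # xs"] unfolding L_def by simp
  qed
  have intN: "w = xs ! (i - 1) \<or> w = xs ! Suc i" if "0 < i" "Suc i < L" "E (xs ! i) w" for i w
  proof -
    have "E (xs ! (i - 1)) (xs ! Suc (i - 1))" using ch[of "i - 1"] that by simp
    then have "E (xs ! (i - 1)) (xs ! i)" using that by simp
    then have e1: "E (xs ! i) (xs ! (i - 1))" using sym by blast
    have e2: "E (xs ! i) (xs ! Suc i)" using ch that by simp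
    have ne: "xs ! (i - 1) \<noteq> xs ! Suc i" using neq[of "i - 1" "Suc i"] that by simp
    show ?thesis by (rule degree_two[OF G D e1 e2 that(3) ne])
  qed
  have closed: "w \<in> set xs" if "x \<in> set xs" "E x w" for x w
  proof -
    have "\<exists>i<length xs. xs ! i = x" using that(1) by (simp add: in_set_conv_nth)
    then obtain i where i0: "i < length xs" "xs ! i = x" by blast
    then have i: "i < L" "x = xs ! i" unfolding L_def by auto
    show ?thesis
    proof (cases "i = 0")
      case True then show ?thesis using firstN that i by simp
    next
      case False
      show ?thesis
      proof (cases "i = L - 1")
        case True then show ?thesis using lastN that i by simp
      next
        case False
        then have "Suc i < L" using i by auto
        then show ?thesis using intN[of i w] \<open>i \<noteq> 0\<close> that i unfolding L_def by auto
      qed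
    qed
  qed
  have x0C: "xs ! 0 \<in> C" using inC L1 by simp
  have reach: "u \<in> set xs" if "E\<^sup>*\<^sup>* (xs ! 0) u" for u
    using that
  proof (induction rule: rtranclp_induct)
    case base then show ?case using L1 unfolding L_def by (cases xs) auto
  next
    case (step y z) then show ?case using closed by blast
  qed
  have setEq: "set xs = C"
  proof
    show "set xs \<subseteq> C" by (rule setC)
    show "C \<subseteq> set xs"
    proof
      fix u assume "u \<in> C"
      have "E\<^sup>*\<^sup>* v (xs ! 0)" using x0C unfolding C_def by simp
      then have "E\<^sup>*\<^sup>* (xs ! 0) v" using rt_sym[OF sym] by blast
      moreover have "E\<^sup>*\<^sup>* v u" using \<open>u \<in> C\<close> unfolding C_def by simp
      ultimately show "u \<in> set xs" using reach by (meson rtranclp_trans)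
    qed
  qed
  have edges: "E (xs ! i) (xs ! j) \<longleftrightarrow> (j = Suc i \<or> (i = 0 \<and> j = L - 1 \<and> E (xs ! 0) (xs ! (L - 1))))"
    if ij: "i < j" "j < L" for i j
  proof
    assume e: "E (xs ! i) (xs ! j)"
    show "j = Suc i \<or> (i = 0 \<and> j = L - 1 \<and> E (xs ! 0) (xs ! (L - 1)))"
    proof (rule ccontr)
      assume nc: "\<not> (j = Suc i \<or> (i = 0 \<and> j = L - 1 \<and> E (xs ! 0) (xs ! (L - 1))))"
      show False
      proof (cases "i = 0")
        case False
        then have "xs ! j = xs ! (i - 1) \<or> xs ! j = xs ! Suc i" using intN[of i "xs ! j"] e ij by simp
        then show False using neq[of j "i - 1"] neq[of j "Suc i"] nc ij False by auto
      next
        case True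
        then have "j \<noteq> L - 1" "j \<noteq> 1" using nc e by auto
        then have "0 < j" "Suc j < L" using ij by auto
        moreover have "E (xs ! j) (xs ! 0)" using e True sym by auto
        ultimately have "xs ! 0 = xs ! (j - 1) \<or> xs ! 0 = xs ! Suc j" using intN by blast
        moreover have "xs ! 0 \<noteq> xs ! (j - 1)"
          by (rule neq) (use \<open>j \<noteq> 1\<close> \<open>0 < j\<close> \<open>Suc j < L\<close> in auto)
        moreover have "xs ! 0 \<noteq> xs ! Suc j"
          by (rule neq) (use \<open>Suc j < L\<close> in auto)
        ultimately show False by blast
      qed
    qed
  next
    assume "j = Suc i \<or> (i = 0 \<and> j = L - 1 \<and> E (xs ! 0) (xs ! (L - 1)))"
    then show "E (xs ! i) (xs ! j)" using ch ij by auto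
  qed
  have bij: "bij_betw ((!) xs) {0..<L} C"
    by (rule bij_betw_nth[OF dist]) (auto simp: L_def setEq)
  show ?thesis
  proof (cases "L \<ge> 3 \<and> E (xs ! 0) (xs ! (L - 1))")
    case True
    have "E (xs ! a) (xs ! b) \<longleftrightarrow> cycle_edge L a b" if ab: "a < L" "b < L" for a b
    proof -
      consider "a < b" | "a = b" | "b < a" by arith
      then show ?thesis
      proof cases
        case 1 then show ?thesis using edges[OF 1 ab(2)] cycle_edge_lt[OF 1 ab(2)] True by auto
      next
        case 2 then show ?thesis using irr True unfolding cycle_edge_def by (auto simp: mod_Suc)
      next
        case 3
        have "E (xs ! a) (xs ! b) \<longleftrightarrow> E (xs ! b) (xs ! a)" using sym by blast
        moreover have "cycle_edge L a b \<longleftrightarrow> cycle_edge L b a" unfolding cycle_edge_def by auto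
        ultimately show ?thesis using edges[OF 3 ab(1)] cycle_edge_lt[OF 3 ab(1)] True by auto
      qed
    qed
    then show ?thesis using bij True by blast
  next
    case False
    have "E (xs ! a) (xs ! b) \<longleftrightarrow> path_edge L a b" if ab: "a < L" "b < L" for a b
    proof -
      consider "a < b" | "a = b" | "b < a" by arith
      then show ?thesis
      proof cases
        case 1
        have r: "E (xs ! a) (xs ! b) \<longleftrightarrow> b = Suc a" using edges[OF 1 ab(2)] False 1 ab by auto
        show ?thesis unfolding r path_edge_def using 1 ab by auto
      next
        case 2 then show ?thesis using irr unfolding path_edge_def by auto
      next
        case 3
        have r: "E (xs ! b) (xs ! a) \<longleftrightarrow> a = Suc b" using edges[OF 3 ab(1)] False 3 ab by auto
        have "E (xs ! a) (xs ! b) \<longleftrightarrow> E (xs ! b) (xs ! a)" using sym by blast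
        then show ?thesis unfolding path_edge_def using r 3 ab by auto
      qed
    qed
    then show ?thesis using bij by blast
  qed
qed


lemma transport_iso:
  assumes bij: "bij_betw g {0..<n} C" and iso: "\<forall>a<n. \<forall>b<n. E (g a) (g b) \<longleftrightarrow> R a b"
    and Y: "Y \<subseteq> {0..<n}"
  shows "induced_iso E (g ` Y) F W \<longleftrightarrow> induced_iso R Y F W"
proof
  have injY: "inj_on g Y" using bij Y by (meson bij_betw_def inj_on_subset)
  assume "induced_iso E (g ` Y) F W"
  then obtain f where f: "bij_betw f (g ` Y) W" "\<forall>x\<in>g ` Y. \<forall>y\<in>g ` Y. E x y \<longleftrightarrow> F (f x) (f y)"
    unfolding induced_iso_def by blast
  have b1: "bij_betw g Y (g ` Y)" using injY by (simp add: bij_betw_def)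
  have "bij_betw (f \<circ> g) Y W" using bij_betw_trans[OF b1 f(1)] .
  moreover have "\<forall>x\<in>Y. \<forall>y\<in>Y. R x y \<longleftrightarrow> F ((f \<circ> g) x) ((f \<circ> g) y)"
  proof (intro ballI)
    fix x y assume xy: "x \<in> Y" "y \<in> Y"
    then have "x < n" "y < n" using Y by auto
    then have "R x y \<longleftrightarrow> E (g x) (g y)" using iso by simp
    moreover have "E (g x) (g y) \<longleftrightarrow> F (f (g x)) (f (g y))" using f(2) xy by blast
    ultimately show "R x y \<longleftrightarrow> F ((f \<circ> g) x) ((f \<circ> g) y)" by simp
  qed
  ultimately show "induced_iso R Y F W" unfolding induced_iso_def by blast
next
  have injY: "inj_on g Y" using bij Y by (meson bij_betw_def inj_on_subset)
  assume "induced_iso R Y F W"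
  then obtain f where f: "bij_betw f Y W" "\<forall>x\<in>Y. \<forall>y\<in>Y. R x y \<longleftrightarrow> F (f x) (f y)"
    unfolding induced_iso_def by blast
  have b1: "bij_betw g Y (g ` Y)" using injY by (simp add: bij_betw_def)
  let ?h = "inv_into Y g"
  have b2: "bij_betw ?h (g ` Y) Y" using bij_betw_inv_into[OF b1] .
  have "bij_betw (f \<circ> ?h) (g ` Y) W" using bij_betw_trans[OF b2 f(1)] .
  moreover have "\<forall>x\<in>g ` Y. \<forall>y\<in>g ` Y. E x y \<longleftrightarrow> F ((f \<circ> ?h) x) ((f \<circ> ?h) y)"
  proof (intro ballI)
    fix x y assume "x \<in> g ` Y" "y \<in> g ` Y"
    then obtain a b where ab: "a \<in> Y" "b \<in> Y" "x = g a" "y = g b" by auto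
    have "?h x = a" "?h y = b" using ab injY by (auto simp: inv_into_f_f)
    moreover have "a < n" "b < n" using ab Y by auto
    moreover have "R a b \<longleftrightarrow> F (f a) (f b)" using f(2) ab by blast
    ultimately show "E x y \<longleftrightarrow> F ((f \<circ> ?h) x) ((f \<circ> ?h) y)" using ab iso by simp
  qed
  ultimately show "induced_iso E (g ` Y) F W" unfolding induced_iso_def by blast
qed

lemma transport:
  assumes bij: "bij_betw g {0..<n} C" and iso: "\<forall>a<n. \<forall>b<n. E (g a) (g b) \<longleftrightarrow> R a b"
  shows "sub_count C E W F = sub_count {0..<n} R W F"
proof -
  have inj: "inj_on g {0..<n}" and img: "g ` {0..<n} = C" using bij by (auto simp: bij_betw_def)
  have eq: "{X. X \<subseteq> C \<and> induced_iso E X F W} = (\<lambda>Y. g ` Y) ` {Y. Y \<subseteq> {0..<n} \<and> induced_iso R Y F W}"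
  proof (intro equalityI subsetI)
    fix X assume "X \<in> {X. X \<subseteq> C \<and> induced_iso E X F W}"
    then have X: "X \<subseteq> C" "induced_iso E X F W" by auto
    define Y where "Y = {a \<in> {0..<n}. g a \<in> X}"
    have Ysub: "Y \<subseteq> {0..<n}" unfolding Y_def by auto
    have gY: "g ` Y = X" unfolding Y_def using X(1) img by auto
    have "induced_iso E (g ` Y) F W" using X(2) gY by simp
    then have "induced_iso R Y F W" using transport_iso[OF bij iso Ysub, of F W] by blast
    then show "X \<in> (\<lambda>Y. g ` Y) ` {Y. Y \<subseteq> {0..<n} \<and> induced_iso R Y F W}" using Ysub gY by auto
  next
    fix X assume "X \<in> (\<lambda>Y. g ` Y) ` {Y. Y \<subseteq> {0..<n} \<and> induced_iso R Y F W}"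
    then obtain Y where Y: "Y \<subseteq> {0..<n}" "induced_iso R Y F W" "X = g ` Y" by auto
    have "induced_iso E (g ` Y) F W" using transport_iso[OF bij iso Y(1), of F W] Y(2) by blast
    then have "induced_iso E X F W" using Y(3) by simp
    moreover have "X \<subseteq> C" using Y img by auto
    ultimately show "X \<in> {X. X \<subseteq> C \<and> induced_iso E X F W}" by simp
  qed
  have "inj_on (\<lambda>Y. g ` Y) {Y. Y \<subseteq> {0..<n} \<and> induced_iso R Y F W}"
    by (rule inj_onI) (use inj_on_image_eq_iff[OF inj] in auto)
  then show ?thesis unfolding sub_count_def eq by (rule card_image)
qed

lemma comp_eq:
  assumes sym: "\<forall>x y. E x y \<longrightarrow> E y x" and "E\<^sup>*\<^sup>* v x"
  shows "{u. E\<^sup>*\<^sup>* v u} = {u. E\<^sup>*\<^sup>* x u}"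
proof -
  have "E\<^sup>*\<^sup>* x v" using rt_sym[OF sym assms(2)] .
  then show ?thesis using assms(2) by (auto intro: rtranclp_trans)
qed

lemma decomp:
  assumes G: "simple_graph V E" and j: "1 \<le> j" and Fstep: "\<forall>a. Suc a < j \<longrightarrow> F a (Suc a)"
  shows "sub_count V E {0..<j} F = (\<Sum>C\<in>components V E. sub_count C E {0..<j} F)"
proof -
  have sym: "\<forall>x y. E x y \<longrightarrow> E y x" and finV: "finite V" using G unfolding simple_graph_def by auto
  have conn: "\<exists>x0. x0 \<in> X \<and> X \<subseteq> {u. E\<^sup>*\<^sup>* x0 u}" if X: "induced_iso E X F {0..<j}" for X
  proof -
    obtain g where g: "bij_betw g {0..<j} X" "\<forall>a\<in>{0..<j}. \<forall>b\<in>{0..<j}. E (g a) (g b) \<longleftrightarrow> F a b"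
      using X unfolding iso_rev by blast
    have r: "a < j \<longrightarrow> E\<^sup>*\<^sup>* (g 0) (g a)" for a
    proof (induction a)
      case 0 then show ?case by simp
    next
      case (Suc a)
      show ?case
      proof
        assume a: "Suc a < j"
        have "E (g a) (g (Suc a))" using g(2) Fstep a by auto
        then show "E\<^sup>*\<^sup>* (g 0) (g (Suc a))" using Suc a by (meson Suc_lessD rtranclp.rtrancl_into_rtrancl)
      qed
    qed
    have "g ` {0..<j} = X" using g(1) by (simp add: bij_betw_def)
    then show ?thesis using r j by (intro exI[where x="g 0"]) auto
  qed
  let ?T = "\<lambda>C. {X. X \<subseteq> C \<and> induced_iso E X F {0..<j}}"
  have compV: "C \<subseteq> V" if "C \<in> components V E" for C
    using that rt_V[OF G] unfolding components_def by auto
  have eq: "{X. X \<subseteq> V \<and> induced_iso E X F {0..<j}} = (\<Union>C\<in>components V E. ?T C)"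
  proof (intro equalityI subsetI)
    fix X assume "X \<in> {X. X \<subseteq> V \<and> induced_iso E X F {0..<j}}"
    then have X: "X \<subseteq> V" "induced_iso E X F {0..<j}" by auto
    obtain x0 where x0: "x0 \<in> X" "X \<subseteq> {u. E\<^sup>*\<^sup>* x0 u}" using conn[OF X(2)] by blast
    have "{u. E\<^sup>*\<^sup>* x0 u} \<in> components V E" unfolding components_def using x0 X by auto
    then show "X \<in> (\<Union>C\<in>components V E. ?T C)" using x0 X by auto
  next
    fix X assume "X \<in> (\<Union>C\<in>components V E. ?T C)"
    then show "X \<in> {X. X \<subseteq> V \<and> induced_iso E X F {0..<j}}" using compV by blast
  qed
  have fin: "finite (components V E)" unfolding components_def using finV by simp
  have finT: "\<forall>C\<in>components V E. finite (?T C)"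
  proof
    fix C assume "C \<in> components V E"
    then have "finite C" using compV finV finite_subset by blast
    then show "finite (?T C)" by (rule finite_subset[rotated, OF iffD2[OF finite_Pow_iff]]) auto
  qed
  have disj: "\<forall>C1\<in>components V E. \<forall>C2\<in>components V E. C1 \<noteq> C2 \<longrightarrow> ?T C1 \<inter> ?T C2 = {}"
  proof (intro ballI impI)
    fix C1 C2 assume C: "C1 \<in> components V E" "C2 \<in> components V E" "C1 \<noteq> C2"
    obtain v1 v2 where v: "C1 = {u. E\<^sup>*\<^sup>* v1 u}" "C2 = {u. E\<^sup>*\<^sup>* v2 u}"
      using C unfolding components_def by auto
    show "?T C1 \<inter> ?T C2 = {}"
    proof (rule ccontr)
      assume "?T C1 \<inter> ?T C2 \<noteq> {}"
      then obtain X where X: "X \<subseteq> C1" "X \<subseteq> C2" "induced_iso E X F {0..<j}" by auto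
      obtain x0 where "x0 \<in> X" using conn[OF X(3)] by blast
      then have "E\<^sup>*\<^sup>* v1 x0" "E\<^sup>*\<^sup>* v2 x0" using X v by auto
      then have "C1 = {u. E\<^sup>*\<^sup>* x0 u}" "C2 = {u. E\<^sup>*\<^sup>* x0 u}" using comp_eq[OF sym] v by auto
      then show False using C(3) by simp
    qed
  qed
  show ?thesis unfolding sub_count_def eq using card_UN_disjoint[OF fin finT disj] .
qed


theorem lemma4p2:
  fixes V :: "'a set" and E :: "'a \<Rightarrow> 'a \<Rightarrow> bool" and k :: nat
  assumes "simple_graph V E" and "max_degree_le V E 2" and "k \<ge> 2"
  shows "int (long_path_components V E (k - 1)) =
           int (path_count V E (k - 1)) - int (path_count V E k) - int k * int (cycle_count V E k)"
proof -
  note G = assms(1) and D = assms(2)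
  define m where "m = k - 1"
  have km: "k = Suc m" and m1: "1 \<le> m" using assms(3) unfolding m_def by auto
  let ?comps = "components V E"
  let ?pm = "\<lambda>C. sub_count C E {0..<m} (path_edge m)"
  let ?pk = "\<lambda>C. sub_count C E {0..<k} (path_edge k)"
  let ?cc = "\<lambda>C. if k \<le> 2 then 0 else sub_count C E {0..<k} (cycle_edge k)"
  let ?Q = "\<lambda>C. \<exists>j\<ge>m. induced_iso E C (path_edge j) (path_verts j)"
  have fin: "finite ?comps" using G unfolding components_def simple_graph_def by simp
  have percomp: "int (?pm C) - int (?pk C) - int k * int (?cc C) = (if ?Q C then 1 else 0)"
    if C: "C \<in> ?comps" for C
  proof -
    obtain v where v: "v \<in> V" "C = {u. E\<^sup>*\<^sup>* v u}" using C unfolding components_def by auto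
    obtain n g where bij: "bij_betw g {0..<n} C" and
      cases: "(\<forall>a<n. \<forall>b<n. E (g a) (g b) \<longleftrightarrow> path_edge n a b) \<or>
           (n \<ge> 3 \<and> (\<forall>a<n. \<forall>b<n. E (g a) (g b) \<longleftrightarrow> cycle_edge n a b))"
      using classify[OF G D v(1)] v(2) by blast
    have gimg: "g ` {0..<n} = C" using bij by (simp add: bij_betw_def)
    from cases show ?thesis
    proof
      assume iso: "\<forall>a<n. \<forall>b<n. E (g a) (g b) \<longleftrightarrow> path_edge n a b"
      have pm: "?pm C = n + 1 - m"
        unfolding transport[OF bij iso] by (rule path_in_path[OF m1])
      have pk: "?pk C = n + 1 - k"
        unfolding transport[OF bij iso] by (rule path_in_path) (use km in simp)
      have cc: "?cc C = 0"
      proof (cases "k \<le> 2")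
        case False then show ?thesis unfolding transport[OF bij iso] using cycle_in_path[of k n] by simp
      qed simp
      have Qiff: "induced_iso E C (path_edge j) (path_verts j) \<longleftrightarrow> j = n" for j
      proof -
        have "induced_iso E C (path_edge j) (path_verts j) \<longleftrightarrow>
              induced_iso (path_edge n) {0..<n} (path_edge j) {0..<j}"
          using transport_iso[OF bij iso, of "{0..<n}" "path_edge j" "{0..<j}"] gimg
          unfolding path_verts_def by simp
        also have "\<dots> \<longleftrightarrow> j = n"
        proof
          assume "induced_iso (path_edge n) {0..<n} (path_edge j) {0..<j}"
          then obtain h where "bij_betw h {0..<j} {0..<n}" unfolding iso_rev by blast
          then show "j = n" using bij_card by fastforce
        next
          assume "j = n"
          then show "induced_iso (path_edge n) {0..<n} (path_edge j) {0..<j}"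
            unfolding induced_iso_def by (intro exI[where x=id]) auto
        qed
        finally show ?thesis .
      qed
      have Q: "?Q C \<longleftrightarrow> m \<le> n" using Qiff by auto
      show ?thesis unfolding pm pk cc Q using km by auto
    next
      assume "n \<ge> 3 \<and> (\<forall>a<n. \<forall>b<n. E (g a) (g b) \<longleftrightarrow> cycle_edge n a b)"
      then have n3: "n \<ge> 3" and iso: "\<forall>a<n. \<forall>b<n. E (g a) (g b) \<longleftrightarrow> cycle_edge n a b" by auto
      have pm: "?pm C = (if m < n then n else 0)"
        unfolding transport[OF bij iso] by (rule path_in_cycle[OF n3 m1])
      have pk: "?pk C = (if k < n then n else 0)"
        unfolding transport[OF bij iso] by (rule path_in_cycle[OF n3]) (use km in simp)
      have cc: "?cc C = (if k \<le> 2 then 0 else if k = n then 1 else 0)"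
      proof (cases "k \<le> 2")
        case False then show ?thesis unfolding transport[OF bij iso] using cycle_in_cycle[of k n] n3 by simp
      qed simp
      have notQ: "\<not> ?Q C"
      proof
        assume "?Q C"
        then obtain j where j: "j \<ge> m" "induced_iso E C (path_edge j) (path_verts j)" by blast
        then have "induced_iso (cycle_edge n) {0..<n} (path_edge j) {0..<j}"
          using transport_iso[OF bij iso, of "{0..<n}" "path_edge j" "{0..<j}"] gimg
          unfolding path_verts_def by simp
        moreover have j1: "1 \<le> j" using j m1 by simp
        ultimately have "j < n" using cyc_struct[OF n3 j1] by blast
        moreover obtain h where "bij_betw h {0..<j} {0..<n}"
          using \<open>induced_iso (cycle_edge n) {0..<n} (path_edge j) {0..<j}\<close> unfolding iso_rev by blast
        then have "j = n" using bij_card by fastforce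
        ultimately show False by simp
      qed
      show ?thesis unfolding pm pk cc using notQ km n3 by auto
    qed
  qed
  have PM: "path_count V E m = (\<Sum>C\<in>?comps. ?pm C)"
    unfolding path_count_def path_verts_def by (rule decomp[of V E m "path_edge m", OF G m1 path_edge_step[of m]])
  have PK: "path_count V E k = (\<Sum>C\<in>?comps. ?pk C)"
    unfolding path_count_def path_verts_def by (rule decomp[of V E k "path_edge k", OF G _ path_edge_step[of k]]) (use km in simp)
  have CK: "cycle_count V E k = (\<Sum>C\<in>?comps. ?cc C)"
  proof (cases "k \<le> 2")
    case True then show ?thesis unfolding cycle_count_def by simp
  next
    case False then show ?thesis unfolding cycle_count_def
      using decomp[of V E k "cycle_edge k", OF G _ cycle_edge_step[of k]] by simp
  qed
  have LP: "long_path_components V E m = (\<Sum>C\<in>?comps. if ?Q C then 1 else 0)"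
    unfolding long_path_components_def card_eq_sum using sum.inter_filter[OF fin, of "\<lambda>_. 1::nat" ?Q] by simp
  have "int (long_path_components V E m) = (\<Sum>C\<in>?comps. int (?pm C) - int (?pk C) - int k * int (?cc C))"
    unfolding LP of_nat_sum using percomp by (intro sum.cong) auto
  also have "\<dots> = int (path_count V E m) - int (path_count V E k) - int k * int (cycle_count V E k)"
    unfolding PM PK CK of_nat_sum sum_subtractf sum_distrib_left by simp
  finally show ?thesis unfolding m_def .
qed


end
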